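(* Let $G$ be a connected simple graph with maximum degree at most $3$ and minimum degree at least $2$, in which no two adjacent vertices both have degree $3$. Let $M_1,M_2$ be disjoint matchings of $G$ such that $|M_1\cup M_2|$ is maximum over all pairs of disjoint matchings, and, subject to this, such that $G_{M_1,M_2}$ has the minimum number of connected components. Let $H$ be the graph with vertex set $E(G)\setminus(M_1\cup M_2)$ in which two distinct edges $e_1,e_2$ are adjacent if and only if their distance in $G$ is at most $2$. If $u_1u_2u_3$ and $v_1v_2v_3$ are two distinct components of $G_{M_1,M_2}$ that are paths $P_3$, then $u_1u_2,u_2u_3$ and $v_1v_2,v_2v_3$ do not lie in the same connected component of $H$.
   Context: $G_{M_1,M_2}$ denotes the subgraph of $G$ induced by the edge set $E(G)\setminus(M_1\cup M_2)$. $P_k$ denotes a path on $k$ vertices. The distance between two edges of $G$ is the distance between the corresponding vertices in the line graph of $G$. *)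

theory Defs
  imports Main
begin

definition simple_graph :: "'a set \<Rightarrow> 'a set set \<Rightarrow> bool" where
  "simple_graph V E \<longleftrightarrow> finite V \<and>
     (\<forall>e\<in>E. \<exists>u v. u \<noteq> v \<and> e = {u, v} \<and> u \<in> V \<and> v \<in> V)"

definition degree :: "'a set set \<Rightarrow> 'a \<Rightarrow> nat" where
  "degree E v = card {e \<in> E. v \<in> e}"

definition restr_adj :: "'b set \<Rightarrow> ('b \<Rightarrow> 'b \<Rightarrow> bool) \<Rightarrow> 'b \<Rightarrow> 'b \<Rightarrow> bool" where
  "restr_adj W adj x y \<longleftrightarrow> x \<in> W \<and> y \<in> W \<and> adj x y"

definition components :: "'b set \<Rightarrow> ('b \<Rightarrow> 'b \<Rightarrow> bool) \<Rightarrow> 'b set set" where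
  "components W adj = {{y \<in> W. (restr_adj W adj)\<^sup>*\<^sup>* x y} | x. x \<in> W}"

definition connected_graph :: "'a set \<Rightarrow> 'a set set \<Rightarrow> bool" where
  "connected_graph V E \<longleftrightarrow> V \<noteq> {} \<and>
     (\<forall>u\<in>V. \<forall>v\<in>V. (restr_adj V (\<lambda>x y. {x, y} \<in> E))\<^sup>*\<^sup>* u v)"

definition matching :: "'a set set \<Rightarrow> 'a set set \<Rightarrow> bool" where
  "matching E M \<longleftrightarrow> M \<subseteq> E \<and> (\<forall>e1\<in>M. \<forall>e2\<in>M. e1 \<noteq> e2 \<longrightarrow> e1 \<inter> e2 = {})"

definition edge_sub_components :: "'a set set \<Rightarrow> 'a set set" where
  "edge_sub_components F = components (\<Union>F) (\<lambda>x y. {x, y} \<in> F)"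

definition rest_edges :: "'a set set \<Rightarrow> 'a set set \<Rightarrow> 'a set set \<Rightarrow> 'a set set" where
  "rest_edges E M1 M2 = E - (M1 \<union> M2)"

definition edge_dist_le2 :: "'a set set \<Rightarrow> 'a set \<Rightarrow> 'a set \<Rightarrow> bool" where
  "edge_dist_le2 E e1 e2 \<longleftrightarrow> e1 = e2 \<or> e1 \<inter> e2 \<noteq> {} \<or>
     (\<exists>e3\<in>E. e1 \<inter> e3 \<noteq> {} \<and> e3 \<inter> e2 \<noteq> {})"

definition H_adj :: "'a set set \<Rightarrow> 'a set \<Rightarrow> 'a set \<Rightarrow> bool" where
  "H_adj E e1 e2 \<longleftrightarrow> e1 \<noteq> e2 \<and> edge_dist_le2 E e1 e2"

definition H_components :: "'a set set \<Rightarrow> 'a set set \<Rightarrow> 'a set set \<Rightarrow> 'a set set set" where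
  "H_components E M1 M2 = components (rest_edges E M1 M2) (H_adj E)"

definition P3_component :: "'a set set \<Rightarrow> 'a set set \<Rightarrow> 'a set set \<Rightarrow> 'a \<Rightarrow> 'a \<Rightarrow> 'a \<Rightarrow> bool" where
  "P3_component E M1 M2 u1 u2 u3 \<longleftrightarrow>
     distinct [u1, u2, u3] \<and>
     {u1, u2, u3} \<in> edge_sub_components (rest_edges E M1 M2) \<and>
     {e \<in> rest_edges E M1 M2. e \<subseteq> {u1, u2, u3}} = {{u1, u2}, {u2, u3}}"

definition optimal_pair :: "'a set set \<Rightarrow> 'a set set \<Rightarrow> 'a set set \<Rightarrow> bool" where
  "optimal_pair E M1 M2 \<longleftrightarrow>
     matching E M1 \<and> matching E M2 \<and> M1 \<inter> M2 = {} \<and>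
     (\<forall>N1 N2. matching E N1 \<and> matching E N2 \<and> N1 \<inter> N2 = {} \<longrightarrow>
        card (N1 \<union> N2) \<le> card (M1 \<union> M2)) \<and>
     (\<forall>N1 N2. matching E N1 \<and> matching E N2 \<and> N1 \<inter> N2 = {} \<and>
        card (N1 \<union> N2) = card (M1 \<union> M2) \<longrightarrow>
        card (edge_sub_components (rest_edges E M1 M2))
          \<le> card (edge_sub_components (rest_edges E N1 N2)))"

end

theory Submission
  imports Defs
begin

lemma walk_exists:
  assumes "r\<^sup>*\<^sup>* x y"
  shows "\<exists>xs. xs \<noteq> [] \<and> hd xs = x \<and> last xs = y \<and> distinct xs \<and> successively r xs"
  using assms
proof (induction rule: rtranclp_induct)
  case base
  then show ?case by (intro exI[of _ "[x]"]) auto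
next
  case (step b c)
  then obtain xs where xs: "xs \<noteq> []" "hd xs = x" "last xs = b" "distinct xs" "successively r xs" by blast
  show ?case
  proof (cases "c \<in> set xs")
    case True
    then obtain ys zs where sp: "xs = ys @ c # zs" by (meson split_list)
    have "successively r (ys @ [c])"
      using xs(5) unfolding sp by (auto simp: successively_append_iff)
    moreover have "hd (ys @ [c]) = x" using xs(2) sp by (cases ys) auto
    moreover have "distinct (ys @ [c])" using xs(4) sp by auto
    ultimately show ?thesis by (intro exI[of _ "ys @ [c]"]) auto
  next
    case False
    have "successively r (xs @ [c])"
      using xs step(2) by (auto simp: successively_append_iff)
    then show ?thesis using xs False by (intro exI[of _ "xs @ [c]"]) auto
  qed
qed

lemma three_leaves:
  fixes S :: "'a set set"
  assumes edges: "\<forall>e\<in>S. \<exists>p q. p \<noteq> q \<and> e = {p, q}"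
    and deg2: "\<And>v e1 e2 e3. e1 \<in> S \<Longrightarrow> e2 \<in> S \<Longrightarrow> e3 \<in> S \<Longrightarrow> v \<in> e1 \<Longrightarrow> v \<in> e2 \<Longrightarrow> v \<in> e3
         \<Longrightarrow> e1 = e2 \<or> e1 = e3 \<or> e2 = e3"
    and leaf: "\<And>w e e'. w \<in> {x, y, z} \<Longrightarrow> e \<in> S \<Longrightarrow> e' \<in> S \<Longrightarrow> w \<in> e \<Longrightarrow> w \<in> e' \<Longrightarrow> e = e'"
    and dist: "distinct [x, y, z]"
    and ry: "(\<lambda>p q. {p, q} \<in> S)\<^sup>*\<^sup>* x y"
    and rz: "(\<lambda>p q. {p, q} \<in> S)\<^sup>*\<^sup>* x z"
  shows False
proof -
  obtain xs where xs: "xs \<noteq> []" "hd xs = x" "last xs = y" "distinct xs"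
      "successively (\<lambda>p q. {p, q} \<in> S) xs"
    using walk_exists[OF ry] by blast
  have nself: "n \<noteq> w" if "{w, n} \<in> S" for w n
    proof
    assume "n = w"
    then have "{w} \<in> S" using that by simp
    then obtain p q where "p \<noteq> q" "{w} = {p, q}" using edges by blast
    moreover have "p \<in> {w}" "q \<in> {w}" using \<open>{w} = {p, q}\<close> by blast+
    ultimately show False by blast
  qed
  have facts: "(ys \<noteq> [] \<longrightarrow> {last ys, w} \<in> S) \<and> (zs \<noteq> [] \<longrightarrow> {w, hd zs} \<in> S) \<and>
      (ys = [] \<longleftrightarrow> w = x) \<and> (zs = [] \<longleftrightarrow> w = y) \<and> (ys \<noteq> [] \<longrightarrow> zs \<noteq> [] \<longrightarrow> last ys \<noteq> hd zs)"
    if sp: "xs = ys @ w # zs" for ys w zs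
  proof -
    have s: "successively (\<lambda>p q. {p, q} \<in> S) (ys @ w # zs)" using xs(5) sp by simp
    have a: "ys \<noteq> [] \<longrightarrow> {last ys, w} \<in> S" using s by (auto simp: successively_append_iff)
    have b: "zs \<noteq> [] \<longrightarrow> {w, hd zs} \<in> S" using s
      by (cases zs) (auto simp: successively_append_iff)
    have c: "ys = [] \<longleftrightarrow> w = x"
    proof
      assume "ys = []"
      then have "xs = w # zs" using sp by simp
      then show "w = x" using xs(2) by simp
    next
      assume "w = x"
      show "ys = []"
      proof (rule ccontr)
        assume ne: "ys \<noteq> []"
        then have "hd xs = hd ys" using sp by simp
        then have "x \<in> set ys" using ne xs(2) by (metis list.set_sel(1))
        then show False using xs(4) sp \<open>w = x\<close> by auto
      qed
    qed
    have d: "zs = [] \<longleftrightarrow> w = y"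
    proof
      assume "zs = []"
      then have "xs = ys @ [w]" using sp by simp
      then show "w = y" using xs(3) by simp
    next
      assume "w = y"
      show "zs = []"
      proof (rule ccontr)
        assume ne: "zs \<noteq> []"
        then have "last xs = last zs" using sp by simp
        then have "y \<in> set zs" using ne xs(3) by (metis last_in_set)
        then show False using xs(4) sp \<open>w = y\<close> by auto
      qed
    qed
    have e: "ys \<noteq> [] \<longrightarrow> zs \<noteq> [] \<longrightarrow> last ys \<noteq> hd zs"
    proof (intro impI)
      assume "ys \<noteq> []" "zs \<noteq> []"
      then have "last ys \<in> set ys" "hd zs \<in> set zs" by simp_all
      then show "last ys \<noteq> hd zs" using xs(4) sp by auto
    qed
    show ?thesis using a b c d e by blast
  qed
  have closed: "n \<in> set xs" if w: "w \<in> set xs" and wn: "{w, n} \<in> S" for w n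
  proof -
    obtain ys zs where sp: "xs = ys @ w # zs" using w by (meson split_list)
    have f1: "ys \<noteq> [] \<Longrightarrow> {last ys, w} \<in> S" and f2: "zs \<noteq> [] \<Longrightarrow> {w, hd zs} \<in> S"
      and f3: "ys = [] \<longleftrightarrow> w = x" and f4: "zs = [] \<longleftrightarrow> w = y"
      and f5: "ys \<noteq> [] \<Longrightarrow> zs \<noteq> [] \<Longrightarrow> last ys \<noteq> hd zs"
      using facts[OF sp] by blast+
    have nw: "n \<noteq> w" using nself[OF wn] .
    have xy: "x \<noteq> y" using dist by simp
    show ?thesis
    proof (cases "ys = []")
      case True
      then have "w = x" using f3 by simp
      have "zs \<noteq> []" using f4 xy \<open>w = x\<close> by simp
      then have e2: "{w, hd zs} \<in> S" using f2 by simp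
      have "{w, n} = {w, hd zs}" using leaf[of w "{w,n}" "{w, hd zs}", OF _ wn e2] \<open>w = x\<close> by simp
      then have "n = hd zs" using nw by (simp add: doubleton_eq_iff)
      then show ?thesis using sp \<open>zs \<noteq> []\<close> by simp
    next
      case False
      show ?thesis
      proof (cases "zs = []")
        case True
        then have "w = y" using f4 by simp
        have e1: "{last ys, w} \<in> S" using f1 False by simp
        have "{w, n} = {last ys, w}" using leaf[of w "{w,n}" "{last ys, w}", OF _ wn e1] \<open>w = y\<close> by simp
        then have "n = last ys" using nw by (simp add: doubleton_eq_iff)
        then show ?thesis using sp False by simp
      next
        case zs: False
        have e1: "{last ys, w} \<in> S" using f1 False by simp
        have e2: "{w, hd zs} \<in> S" using f2 zs by simp
        have ne: "last ys \<noteq> hd zs" using f5 False zs by simp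
        have "last ys \<noteq> w" using nself[OF e1] by simp
        then have "{last ys, w} \<noteq> {w, hd zs}" using ne by (simp add: doubleton_eq_iff)
        then have "{w, n} = {last ys, w} \<or> {w, n} = {w, hd zs}"
          using deg2[OF e1 e2 wn, of w] by auto
        then have "n = last ys \<or> n = hd zs" using nw by (auto simp add: doubleton_eq_iff)
        then show ?thesis using sp False zs by auto
      qed
    qed
  qed
  have "x \<in> set xs" using xs by (metis hd_in_set)
  have zin: "z \<in> set xs" using rz
  proof (induction rule: rtranclp_induct)
    case base then show ?case using \<open>x \<in> set xs\<close> .
  next
    case (step b c) then show ?case using closed by blast
  qed
  obtain ys zs where sp: "xs = ys @ z # zs" using zin by (meson split_list)
  have f1: "ys \<noteq> [] \<Longrightarrow> {last ys, z} \<in> S" and f2: "zs \<noteq> [] \<Longrightarrow> {z, hd zs} \<in> S"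
    and f3: "ys = [] \<longleftrightarrow> z = x" and f4: "zs = [] \<longleftrightarrow> z = y"
    and f5: "ys \<noteq> [] \<Longrightarrow> zs \<noteq> [] \<Longrightarrow> last ys \<noteq> hd zs"
    using facts[OF sp] by blast+
  have "ys \<noteq> []" "zs \<noteq> []" using f3 f4 dist by auto
  then have e1: "{last ys, z} \<in> S" and e2: "{z, hd zs} \<in> S" and ne: "last ys \<noteq> hd zs"
    using f1 f2 f5 by simp_all
  have "{last ys, z} = {z, hd zs}" using leaf[OF _ e1 e2, of z] by simp
  moreover have "last ys \<noteq> z" using nself[OF e1] by simp
  ultimately show False using ne by (simp add: doubleton_eq_iff)
qed


definition covered :: "'a set set \<Rightarrow> 'a \<Rightarrow> bool" where
  "covered M v \<longleftrightarrow> (\<exists>e\<in>M. v \<in> e)"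

definition maxpair :: "'a set set \<Rightarrow> 'a set set \<Rightarrow> 'a set set \<Rightarrow> bool" where
  "maxpair E M1 M2 \<longleftrightarrow> matching E M1 \<and> matching E M2 \<and> M1 \<inter> M2 = {} \<and>
     (\<forall>N1 N2. matching E N1 \<and> matching E N2 \<and> N1 \<inter> N2 = {} \<longrightarrow>
        card (N1 \<union> N2) \<le> card (M1 \<union> M2))"

lemma sg_finite: "simple_graph V E \<Longrightarrow> finite E"
proof -
  assume a: "simple_graph V E"
  have "E \<subseteq> Pow V"
  proof
    fix e assume "e \<in> E"
    then obtain u v where "e = {u, v}" "u \<in> V" "v \<in> V" using a unfolding simple_graph_def by blast
    then show "e \<in> Pow V" by simp
  qed
  moreover have "finite V" using a unfolding simple_graph_def by blast
  ultimately show ?thesis by (meson finite_Pow_iff finite_subset)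
qed

lemma sg_edge:
  assumes "simple_graph V E" "e \<in> E" "w \<in> e"
  shows "\<exists>y. y \<noteq> w \<and> e = {w, y} \<and> w \<in> V \<and> y \<in> V"
proof -
  obtain p q where "p \<noteq> q" "e = {p, q}" "p \<in> V" "q \<in> V"
    using assms unfolding simple_graph_def by blast
  then show ?thesis using assms(3) by (metis insert_commute insert_iff singletonD)
qed

lemma sg_noself: "simple_graph V E \<Longrightarrow> {w, n} \<in> E \<Longrightarrow> n \<noteq> w"
  using sg_edge[of V E "{w,n}" w] by (auto simp: doubleton_eq_iff)

lemma match_unique: "matching E M \<Longrightarrow> e \<in> M \<Longrightarrow> e' \<in> M \<Longrightarrow> v \<in> e \<Longrightarrow> v \<in> e' \<Longrightarrow> e = e'"
  unfolding matching_def by blast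

lemma add_match:
  assumes "matching E M" "{p, q} \<in> E" "\<not> covered M p" "\<not> covered M q"
  shows "matching E (insert {p, q} M)"
  using assms unfolding matching_def covered_def by blast

lemma card_ins:
  assumes "finite E" "N1 \<subseteq> E" "N2 \<subseteq> E" "e \<notin> N1 \<union> N2"
  shows "card (insert e N1 \<union> N2) = Suc (card (N1 \<union> N2))"
proof -
  have fin: "finite (N1 \<union> N2)" using assms by (meson finite_Un finite_subset)
  have "card (insert e (N1 \<union> N2)) = Suc (card (N1 \<union> N2))" by (rule card_insert_disjoint[OF fin assms(4)])
  then show ?thesis by (simp only: Un_insert_left)
qed

lemma add_contra1:
  assumes "simple_graph V E" "maxpair E M1 M2" "matching E N1" "matching E N2" "N1 \<inter> N2 = {}"
    "card (N1 \<union> N2) = card (M1 \<union> M2)" "{p, q} \<in> E" "{p, q} \<notin> N1 \<union> N2"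
    "\<not> covered N1 p" "\<not> covered N1 q"
  shows False
proof -
  have m: "matching E (insert {p, q} N1)" by (rule add_match[OF assms(3,7,9,10)])
  have d: "insert {p, q} N1 \<inter> N2 = {}" using assms(5,8) by blast
  have s1: "N1 \<subseteq> E" "N2 \<subseteq> E" using assms(3,4) unfolding matching_def by simp_all
  have "card (insert {p, q} N1 \<union> N2) = Suc (card (N1 \<union> N2))"
    by (rule card_ins[OF sg_finite[OF assms(1)] s1 assms(8)])
  moreover have "card (insert {p, q} N1 \<union> N2) \<le> card (M1 \<union> M2)"
  proof -
    have all: "\<forall>N1 N2. matching E N1 \<and> matching E N2 \<and> N1 \<inter> N2 = {} \<longrightarrow>
        card (N1 \<union> N2) \<le> card (M1 \<union> M2)" using assms(2) unfolding maxpair_def by (elim conjE)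
    show ?thesis using all[rule_format, OF conjI[OF m conjI[OF assms(4) d]]] .
  qed
  ultimately show False using assms(6) by linarith
qed

lemma add_contra2:
  assumes "simple_graph V E" "maxpair E M1 M2" "matching E N1" "matching E N2" "N1 \<inter> N2 = {}"
    "card (N1 \<union> N2) = card (M1 \<union> M2)" "{p, q} \<in> E" "{p, q} \<notin> N1 \<union> N2"
    "\<not> covered N2 p" "\<not> covered N2 q"
  shows False
proof -
  have a: "N2 \<inter> N1 = {}" "card (N2 \<union> N1) = card (M1 \<union> M2)" "{p, q} \<notin> N2 \<union> N1"
    using assms(5,6,8) by (auto simp only: Un_commute Int_commute)
  show False by (rule add_contra1[OF assms(1,2,4,3) a(1,2) assms(7) a(3) assms(9,10)])
qed

lemma maxpair_sym: "maxpair E M1 M2 \<Longrightarrow> maxpair E M2 M1"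
  unfolding maxpair_def by (simp add: Un_commute Int_commute)

lemma rest_sym: "rest_edges E M1 M2 = rest_edges E M2 M1"
  unfolding rest_edges_def by blast

lemma deg_ge3:
  assumes "simple_graph V E" "e1 \<in> E" "e2 \<in> E" "e3 \<in> E" "v \<in> e1" "v \<in> e2" "v \<in> e3"
    "e1 \<noteq> e2" "e1 \<noteq> e3" "e2 \<noteq> e3"
  shows "degree E v \<ge> 3"
proof -
  have "{e1, e2, e3} \<subseteq> {e \<in> E. v \<in> e}" using assms by blast
  moreover have "finite {e \<in> E. v \<in> e}" using sg_finite[OF assms(1)] by simp
  ultimately have "card {e1, e2, e3} \<le> degree E v" unfolding degree_def by (rule card_mono[rotated])
  moreover have dd: "distinct [e1, e2, e3]" using assms(8-10) by auto
  moreover have "card {e1, e2, e3} = length [e1, e2, e3]" using distinct_card[OF dd] by (simp only: list.set)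
  moreover have "length [e1, e2, e3] = 3" by simp
  ultimately show ?thesis by linarith
qed

lemma deg_le3_cases:
  assumes "simple_graph V E" "degree E v \<le> 3" "e1 \<in> E" "e2 \<in> E" "e3 \<in> E" "v \<in> e1" "v \<in> e2" "v \<in> e3"
    "e1 \<noteq> e2" "e1 \<noteq> e3" "e2 \<noteq> e3" "e \<in> E" "v \<in> e"
  shows "e = e1 \<or> e = e2 \<or> e = e3"
proof (rule ccontr)
  assume n: "\<not> ?thesis"
  have "{e1, e2, e3, e} \<subseteq> {e \<in> E. v \<in> e}" using assms by blast
  moreover have "finite {e \<in> E. v \<in> e}" using sg_finite[OF assms(1)] by simp
  ultimately have "card {e1, e2, e3, e} \<le> degree E v" unfolding degree_def by (rule card_mono[rotated])
  moreover have dd: "distinct [e1, e2, e3, e]" using assms(9-11) n by auto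
  moreover have "card {e1, e2, e3, e} = length [e1, e2, e3, e]" using distinct_card[OF dd] by (simp only: list.set)
  moreover have "length [e1, e2, e3, e] = 4" by simp
  ultimately show False using assms(2) by linarith
qed

lemma deg_le2_cases:
  assumes "simple_graph V E" "degree E v \<le> 2" "e1 \<in> E" "e2 \<in> E" "v \<in> e1" "v \<in> e2"
    "e1 \<noteq> e2" "e \<in> E" "v \<in> e"
  shows "e = e1 \<or> e = e2"
proof (rule ccontr)
  assume n: "\<not> ?thesis"
  have "{e1, e2, e} \<subseteq> {e \<in> E. v \<in> e}" using assms by blast
  moreover have "finite {e \<in> E. v \<in> e}" using sg_finite[OF assms(1)] by simp
  ultimately have "card {e1, e2, e} \<le> degree E v" unfolding degree_def by (rule card_mono[rotated])
  moreover have dd: "distinct [e1, e2, e]" using assms(7) n by auto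
  moreover have "card {e1, e2, e} = length [e1, e2, e]" using distinct_card[OF dd] by (simp only: list.set)
  moreover have "length [e1, e2, e] = 3" by simp
  ultimately show False using assms(2) by linarith
qed

lemma deg_other:
  assumes "simple_graph V E" "degree E v \<ge> 2" "e1 \<in> E" "v \<in> e1"
  shows "\<exists>e2\<in>E. v \<in> e2 \<and> e2 \<noteq> e1"
proof (rule ccontr)
  assume "\<not> ?thesis"
  then have "{e \<in> E. v \<in> e} \<subseteq> {e1}" by blast
  then have "degree E v \<le> card {e1}" unfolding degree_def by (rule card_mono[rotated]) simp
  moreover have "card {e1} = 1" by (rule card.insert_remove[THEN trans]) simp_all
  ultimately show False using assms(2) by linarith
qed

lemma deg_other3:
  assumes "simple_graph V E" "degree E v \<ge> 3" "e1 \<in> E" "e2 \<in> E"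
  shows "\<exists>e3\<in>E. v \<in> e3 \<and> e3 \<noteq> e1 \<and> e3 \<noteq> e2"
proof (rule ccontr)
  assume "\<not> ?thesis"
  then have "{e \<in> E. v \<in> e} \<subseteq> {e1, e2}" by blast
  then have "degree E v \<le> card {e1, e2}" unfolding degree_def by (rule card_mono[rotated]) simp
  moreover have "card {e1, e2} \<le> 2" by (cases "e1 = e2") simp_all
  ultimately show False using assms(2) by linarith
qed


definition lp3 :: "'a set set \<Rightarrow> 'a set set \<Rightarrow> 'a set set \<Rightarrow> 'a \<Rightarrow> 'a \<Rightarrow> 'a \<Rightarrow> bool" where
  "lp3 E M1 M2 u1 u2 u3 \<longleftrightarrow> distinct [u1, u2, u3] \<and>
     {u1, u2} \<in> rest_edges E M1 M2 \<and> {u2, u3} \<in> rest_edges E M1 M2 \<and>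
     \<not> covered M1 u2 \<and> \<not> covered M2 u2 \<and> covered M1 u1 \<and> covered M2 u1 \<and>
     covered M1 u3 \<and> covered M2 u3 \<and>
     (\<forall>e\<in>rest_edges E M1 M2. e \<inter> {u1, u2, u3} \<noteq> {} \<longrightarrow> e = {u1, u2} \<or> e = {u2, u3})"

lemma lp3_rev: "lp3 E M1 M2 u1 u2 u3 \<Longrightarrow> lp3 E M1 M2 u3 u2 u1"
  unfolding lp3_def by (auto simp: insert_commute)

lemma lp3_symM: "lp3 E M1 M2 u1 u2 u3 \<Longrightarrow> lp3 E M2 M1 u1 u2 u3"
  unfolding lp3_def by (auto simp: rest_sym[of E M1 M2])

definition flip :: "'a set \<Rightarrow> 'a set set \<Rightarrow> 'a set set \<Rightarrow> 'a set set" where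
  "flip D A B = {e \<in> A. \<not> e \<subseteq> D} \<union> {e \<in> B. e \<subseteq> D}"

definition closedS :: "'a set \<Rightarrow> 'a set set \<Rightarrow> bool" where
  "closedS D S \<longleftrightarrow> (\<forall>e\<in>S. \<forall>w\<in>e. w \<in> D \<longrightarrow> e \<subseteq> D)"

lemma flip_matching:
  assumes "matching E M1" "matching E M2" "closedS D (M1 \<union> M2)"
  shows "matching E (flip D M1 M2)"
proof -
  have s: "flip D M1 M2 \<subseteq> E" using assms(1,2) unfolding matching_def flip_def by blast
  have cl: "\<And>e w. e \<in> M1 \<union> M2 \<Longrightarrow> w \<in> e \<Longrightarrow> w \<in> D \<Longrightarrow> e \<subseteq> D"
    using assms(3) unfolding closedS_def by blast
  have "e1 \<inter> e2 = {}" if f1: "e1 \<in> flip D M1 M2" and f2: "e2 \<in> flip D M1 M2" and ne: "e1 \<noteq> e2" for e1 e2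
  proof (rule ccontr)
    assume "e1 \<inter> e2 \<noteq> {}" then obtain w where w: "w \<in> e1" "w \<in> e2" by blast
    have c1: "(e1 \<in> M1 \<and> \<not> e1 \<subseteq> D) \<or> (e1 \<in> M2 \<and> e1 \<subseteq> D)" using f1 unfolding flip_def by blast
    have c2: "(e2 \<in> M1 \<and> \<not> e2 \<subseteq> D) \<or> (e2 \<in> M2 \<and> e2 \<subseteq> D)" using f2 unfolding flip_def by blast
    show False
    proof (cases "e1 \<in> M1 \<and> \<not> e1 \<subseteq> D")
      case True
      show False
      proof (cases "e2 \<in> M1 \<and> \<not> e2 \<subseteq> D")
        case True
        then show False using match_unique[OF assms(1), of e1 e2 w] \<open>e1 \<in> M1 \<and> \<not> e1 \<subseteq> D\<close> w ne by blast
      next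
        case False
        then have "e2 \<subseteq> D" using c2 by blast
        then have "w \<in> D" using w by blast
        then show False using cl[of e1 w] True w by blast
      qed
    next
      case False
      then have e1: "e1 \<in> M2" "e1 \<subseteq> D" using c1 by blast+
      show False
      proof (cases "e2 \<in> M1 \<and> \<not> e2 \<subseteq> D")
        case True
        have "w \<in> D" using w e1 by blast
        then show False using cl[of e2 w] True w by blast
      next
        case False
        then have "e2 \<in> M2" using c2 by blast
        then show False using match_unique[OF assms(2), of e1 e2 w] e1 w ne by blast
      qed
    qed
  qed
  then show ?thesis using s unfolding matching_def by blast
qed

lemma flip_disj:
  assumes "M1 \<inter> M2 = {}"
  shows "flip D M1 M2 \<inter> flip D M2 M1 = {}"
  using assms unfolding flip_def by blast

lemma flip_un: "flip D M1 M2 \<union> flip D M2 M1 = M1 \<union> M2"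
  unfolding flip_def by blast

lemma flip_cov_in:
  assumes "closedS D (M1 \<union> M2)" "v \<in> D"
  shows "covered (flip D M1 M2) v = covered M2 v"
  using assms unfolding flip_def closedS_def covered_def by blast

lemma flip_cov_out:
  assumes "v \<notin> D"
  shows "covered (flip D M1 M2) v = covered M1 v"
  using assms unfolding flip_def covered_def by blast

lemma reach_closed:
  assumes "simple_graph V E" "M1 \<union> M2 \<subseteq> E"
  shows "closedS {y. (\<lambda>p q. {p, q} \<in> M1 \<union> M2)\<^sup>*\<^sup>* x y} (M1 \<union> M2)"
  unfolding closedS_def
proof (intro ballI impI)
  fix e w assume e: "e \<in> M1 \<union> M2" and w: "w \<in> e" and wD: "w \<in> {y. (\<lambda>p q. {p, q} \<in> M1 \<union> M2)\<^sup>*\<^sup>* x y}"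
  obtain y where y: "e = {w, y}" using sg_edge[OF assms(1), of e w] e w assms(2) by blast
  then have "(\<lambda>p q. {p, q} \<in> M1 \<union> M2)\<^sup>*\<^sup>* x y" using wD e
    by (metis (no_types, lifting) mem_Collect_eq rtranclp.rtrancl_into_rtrancl)
  then show "e \<subseteq> {y. (\<lambda>p q. {p, q} \<in> M1 \<union> M2)\<^sup>*\<^sup>* x y}" using wD y by auto
qed

lemma caseB_core:
  assumes G: "simple_graph V E" and mp: "maxpair E M1 M2"
    and d: "distinct [u1, u2, u3]"
    and r1: "{u1, u2} \<in> rest_edges E M1 M2" and r2: "{u2, u3} \<in> rest_edges E M1 M2"
    and c2: "\<not> covered M1 u2" and c1: "\<not> covered M2 u1" and c3: "\<not> covered M2 u3"
    and leaf: "\<And>w e e'. w \<in> {u2, u1, u3} \<Longrightarrow> e \<in> M1 \<union> M2 \<Longrightarrow> e' \<in> M1 \<union> M2 \<Longrightarrow> w \<in> e \<Longrightarrow> w \<in> e' \<Longrightarrow> e = e'"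
  shows False
proof -
  have m1: "matching E M1" and m2: "matching E M2" and dj: "M1 \<inter> M2 = {}"
    using mp unfolding maxpair_def by blast+
  have sub: "M1 \<union> M2 \<subseteq> E" using m1 m2 unfolding matching_def by blast
  define D where "D = {y. (\<lambda>p q. {p, q} \<in> M1 \<union> M2)\<^sup>*\<^sup>* u2 y}"
  have cl: "closedS D (M1 \<union> M2)" unfolding D_def by (rule reach_closed[OF G sub])
  have cl': "closedS D (M2 \<union> M1)" using cl by (simp add: Un_commute)
  have u2D: "u2 \<in> D" unfolding D_def by simp
  let ?N1 = "flip D M1 M2" and ?N2 = "flip D M2 M1"
  have n1: "matching E ?N1" using flip_matching[OF m1 m2 cl] .
  have n2: "matching E ?N2" using flip_matching[OF m2 m1 cl'] .
  have nd: "?N1 \<inter> ?N2 = {}" using flip_disj[OF dj] .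
  have nu: "?N1 \<union> ?N2 = M1 \<union> M2" by (rule flip_un)
  have cu2: "\<not> covered ?N2 u2" using flip_cov_in[OF cl' u2D] c2 by simp
  have u1D: "u1 \<in> D"
  proof (rule ccontr)
    assume "u1 \<notin> D"
    then have "\<not> covered ?N2 u1" using flip_cov_out c1 by metis
    then show False using add_contra2[OF G mp n1 n2 nd, of u1 u2] nu r1 cu2
      unfolding rest_edges_def by auto
  qed
  have u3D: "u3 \<in> D"
  proof (rule ccontr)
    assume "u3 \<notin> D"
    then have "\<not> covered ?N2 u3" using flip_cov_out c3 by metis
    then show False using add_contra2[OF G mp n1 n2 nd, of u2 u3] nu r2 cu2
      unfolding rest_edges_def by auto
  qed
  show False
  proof (rule three_leaves[of "M1 \<union> M2" u2 u1 u3])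
    show "\<forall>e\<in>M1 \<union> M2. \<exists>p q. p \<noteq> q \<and> e = {p, q}"
      using sub G unfolding simple_graph_def by blast
    show "e1 = e2 \<or> e1 = e3 \<or> e2 = e3" if "e1 \<in> M1 \<union> M2" "e2 \<in> M1 \<union> M2" "e3 \<in> M1 \<union> M2"
      "v \<in> e1" "v \<in> e2" "v \<in> e3" for v e1 e2 e3
      using that match_unique[OF m1] match_unique[OF m2] by blast
    show "e = e'" if "w \<in> {u2, u1, u3}" "e \<in> M1 \<union> M2" "e' \<in> M1 \<union> M2" "w \<in> e" "w \<in> e'" for w e e'
      using leaf that by blast
    show "distinct [u2, u1, u3]" using d by auto
    show "(\<lambda>p q. {p, q} \<in> M1 \<union> M2)\<^sup>*\<^sup>* u2 u1" using u1D unfolding D_def by simp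
    show "(\<lambda>p q. {p, q} \<in> M1 \<union> M2)\<^sup>*\<^sup>* u2 u3" using u3D unfolding D_def by simp
  qed
qed

lemma caseB1:
  assumes G: "simple_graph V E" and mp: "maxpair E M1 M2"
    and d: "distinct [u1, u2, u3]"
    and r1: "{u1, u2} \<in> rest_edges E M1 M2" and r2: "{u2, u3} \<in> rest_edges E M1 M2"
    and c2: "\<not> covered M1 u2"
    and leaf: "\<And>w e e'. w \<in> {u2, u1, u3} \<Longrightarrow> e \<in> M1 \<union> M2 \<Longrightarrow> e' \<in> M1 \<union> M2 \<Longrightarrow> w \<in> e \<Longrightarrow> w \<in> e' \<Longrightarrow> e = e'"
  shows False
proof -
  have m1: "matching E M1" and m2: "matching E M2" and dj: "M1 \<inter> M2 = {}"
    using mp unfolding maxpair_def by blast+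
  have E1: "{u1, u2} \<in> E" "{u1, u2} \<notin> M1 \<union> M2" "{u2, u3} \<in> E" "{u2, u3} \<notin> M1 \<union> M2"
    using r1 r2 unfolding rest_edges_def by auto
  have cv1: "covered M1 u1"
    using add_contra1[OF G mp m1 m2 dj refl E1(1,2)] c2 by blast
  have cv3: "covered M1 u3"
    using add_contra1[OF G mp m1 m2 dj refl E1(3,4)] c2 by blast
  have nc1: "\<not> covered M2 u1"
    using cv1 leaf[of u1] dj unfolding covered_def by blast
  have nc3: "\<not> covered M2 u3"
    using cv3 leaf[of u3] dj unfolding covered_def by blast
  show False by (rule caseB_core[OF G mp d r1 r2 c2 nc1 nc3]) (rule leaf, assumption+)
qed

lemma caseB:
  assumes G: "simple_graph V E" and mp: "maxpair E M1 M2"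
    and d: "distinct [u1, u2, u3]"
    and r1: "{u1, u2} \<in> rest_edges E M1 M2" and r2: "{u2, u3} \<in> rest_edges E M1 M2"
    and leaf: "\<And>w e e'. w \<in> {u2, u1, u3} \<Longrightarrow> e \<in> M1 \<union> M2 \<Longrightarrow> e' \<in> M1 \<union> M2 \<Longrightarrow> w \<in> e \<Longrightarrow> w \<in> e' \<Longrightarrow> e = e'"
  shows False
proof -
  have dj: "M1 \<inter> M2 = {}" using mp unfolding maxpair_def by blast
  have "\<not> covered M1 u2 \<or> \<not> covered M2 u2"
    using leaf[of u2] dj unfolding covered_def by blast
  then show False
  proof
    assume c: "\<not> covered M1 u2" show False by (rule caseB1[OF G mp d r1 r2 c]) (rule leaf, assumption+)
  next
    assume c: "\<not> covered M2 u2"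
    have r1': "{u1, u2} \<in> rest_edges E M2 M1" and r2': "{u2, u3} \<in> rest_edges E M2 M1"
      using r1 r2 rest_sym[of E M1 M2] by simp_all
    have leaf': "e = e'" if "w \<in> {u2, u1, u3}" "e \<in> M2 \<union> M1" "e' \<in> M2 \<union> M1" "w \<in> e" "w \<in> e'" for w e e'
      using leaf[of w e e'] that by blast
    show False by (rule caseB1[OF G maxpair_sym[OF mp] d r1' r2' c]) (rule leaf', assumption+)
  qed
qed


lemma comp_form: "C \<in> components W adj \<Longrightarrow> \<exists>x0\<in>W. C = {y \<in> W. (restr_adj W adj)\<^sup>*\<^sup>* x0 y}"
  unfolding components_def by blast

lemma comp_closed:
  assumes "C \<in> components W adj" "w \<in> C" "restr_adj W adj w y"
  shows "y \<in> C"
proof -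
  obtain x0 where C: "C = {y \<in> W. (restr_adj W adj)\<^sup>*\<^sup>* x0 y}" using comp_form[OF assms(1)] by blast
  have "y \<in> W" using assms(3) unfolding restr_adj_def by blast
  then show ?thesis using assms(2,3) C by (auto intro: rtranclp.rtrancl_into_rtrancl)
qed

lemma restr_sym:
  assumes "\<And>x y. adj x y \<Longrightarrow> adj y x"
  shows "symp (restr_adj W adj)"
  using assms unfolding symp_def restr_adj_def by blast

lemma comp_reach:
  assumes sym: "\<And>x y. adj x y \<Longrightarrow> adj y x" and C: "C \<in> components W adj" and a: "a \<in> C" and b: "b \<in> C"
  shows "(restr_adj W adj)\<^sup>*\<^sup>* a b"
proof -
  obtain x0 where C: "C = {y \<in> W. (restr_adj W adj)\<^sup>*\<^sup>* x0 y}" using comp_form[OF C] by blast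
  have s: "symp ((restr_adj W adj)\<^sup>*\<^sup>*)" using symp_rtranclp[OF restr_sym[OF sym]] .
  have "(restr_adj W adj)\<^sup>*\<^sup>* a x0" using a C s by (auto dest: sympD)
  moreover have "(restr_adj W adj)\<^sup>*\<^sup>* x0 b" using b C by auto
  ultimately show ?thesis by (rule rtranclp_trans)
qed

lemma comp_disj:
  assumes sym: "\<And>x y. adj x y \<Longrightarrow> adj y x" and C1: "C1 \<in> components W adj" and C2: "C2 \<in> components W adj"
    and z1: "z \<in> C1" and z2: "z \<in> C2"
  shows "C1 = C2"
proof -
  obtain x1 where X1: "C1 = {y \<in> W. (restr_adj W adj)\<^sup>*\<^sup>* x1 y}" "x1 \<in> W" using comp_form[OF C1] by blast
  obtain x2 where X2: "C2 = {y \<in> W. (restr_adj W adj)\<^sup>*\<^sup>* x2 y}" "x2 \<in> W" using comp_form[OF C2] by blast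
  have s: "symp ((restr_adj W adj)\<^sup>*\<^sup>*)" using symp_rtranclp[OF restr_sym[OF sym]] .
  have "(restr_adj W adj)\<^sup>*\<^sup>* x1 z" "(restr_adj W adj)\<^sup>*\<^sup>* x2 z" using z1 z2 X1 X2 by auto
  then have "(restr_adj W adj)\<^sup>*\<^sup>* x1 x2" "(restr_adj W adj)\<^sup>*\<^sup>* x2 x1"
    using s by (meson rtranclp_trans sympD)+
  then show ?thesis using X1 X2 by (auto intro: rtranclp_trans)
qed

lemma p3_closure:
  assumes G: "simple_graph V E" and P: "P3_component E M1 M2 u1 u2 u3"
  shows "\<forall>e\<in>rest_edges E M1 M2. e \<inter> {u1, u2, u3} \<noteq> {} \<longrightarrow> e = {u1, u2} \<or> e = {u2, u3}"
proof (intro ballI impI)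
  fix e assume e: "e \<in> rest_edges E M1 M2" and m: "e \<inter> {u1, u2, u3} \<noteq> {}"
  let ?R = "rest_edges E M1 M2"
  have C: "{u1, u2, u3} \<in> components (\<Union>?R) (\<lambda>x y. {x, y} \<in> ?R)"
    using P unfolding P3_component_def edge_sub_components_def by blast
  obtain w where w: "w \<in> e" "w \<in> {u1, u2, u3}" using m by blast
  have eE: "e \<in> E" using e unfolding rest_edges_def by blast
  obtain y where y: "e = {w, y}" using sg_edge[OF G eE w(1)] by blast
  have "restr_adj (\<Union>?R) (\<lambda>x y. {x, y} \<in> ?R) w y"
    unfolding restr_adj_def using e y by blast
  then have "y \<in> {u1, u2, u3}" using comp_closed[OF C w(2)] by blast
  then have "e \<in> {e \<in> ?R. e \<subseteq> {u1, u2, u3}}" using e y w by blast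
  then show "e = {u1, u2} \<or> e = {u2, u3}" using P unfolding P3_component_def by blast
qed

definition good :: "'a set \<Rightarrow> 'a set set \<Rightarrow> bool" where
  "good V E \<longleftrightarrow> simple_graph V E \<and> (\<forall>v\<in>V. degree E v \<le> 3) \<and> (\<forall>v\<in>V. degree E v \<ge> 2) \<and>
     (\<forall>u\<in>V. \<forall>v\<in>V. {u, v} \<in> E \<longrightarrow> \<not> (degree E u = 3 \<and> degree E v = 3))"

lemma p3_to_lp3:
  assumes gd: "good V E" and mp: "maxpair E M1 M2" and P: "P3_component E M1 M2 u1 u2 u3"
  shows "lp3 E M1 M2 u1 u2 u3"
proof -
  have G: "simple_graph V E" and dle: "\<And>v. v \<in> V \<Longrightarrow> degree E v \<le> 3"
    and dge: "\<And>v. v \<in> V \<Longrightarrow> degree E v \<ge> 2"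
    and n33: "\<And>u v. u \<in> V \<Longrightarrow> v \<in> V \<Longrightarrow> {u, v} \<in> E \<Longrightarrow> \<not> (degree E u = 3 \<and> degree E v = 3)"
    using gd unfolding good_def by blast+
  have m1: "matching E M1" and m2: "matching E M2" and dj: "M1 \<inter> M2 = {}"
    using mp unfolding maxpair_def by blast+
  let ?R = "rest_edges E M1 M2"
  have d: "distinct [u1, u2, u3]" using P unfolding P3_component_def by blast
  have rr: "{e \<in> ?R. e \<subseteq> {u1, u2, u3}} = {{u1, u2}, {u2, u3}}" using P unfolding P3_component_def by blast
  have r1: "{u1, u2} \<in> ?R" and r2: "{u2, u3} \<in> ?R" using rr by blast+
  have cl: "\<forall>e\<in>?R. e \<inter> {u1, u2, u3} \<noteq> {} \<longrightarrow> e = {u1, u2} \<or> e = {u2, u3}" using p3_closure[OF G P] .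
  have E1: "{u1, u2} \<in> E" "{u1, u2} \<notin> M1 \<union> M2" "{u2, u3} \<in> E" "{u2, u3} \<notin> M1 \<union> M2"
    using r1 r2 unfolding rest_edges_def by auto
  have V: "u1 \<in> V" "u2 \<in> V" "u3 \<in> V" using sg_edge[OF G E1(1)] sg_edge[OF G E1(3)] by auto
  have ne12: "{u1, u2} \<noteq> {u2, u3}" using d by (auto simp: doubleton_eq_iff)
  have sub: "M1 \<union> M2 \<subseteq> E" using m1 m2 unfolding matching_def by blast
  show ?thesis
  proof (cases "degree E u2 = 3")
    case True
    have d1: "degree E u1 \<le> 2" using n33[OF V(1,2) E1(1)] True dle[OF V(1)] by auto
    have d3: "degree E u3 \<le> 2" using n33[OF V(2,3)] E1(3) True dle[OF V(3)] by (auto simp: insert_commute)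
    have leaf: "e = e'" if w: "w \<in> {u2, u1, u3}" and e: "e \<in> M1 \<union> M2" and e': "e' \<in> M1 \<union> M2"
      and we: "w \<in> e" and we': "w \<in> e'" for w e e'
    proof (rule ccontr)
      assume ne: "e \<noteq> e'"
      have eE: "e \<in> E" "e' \<in> E" using e e' sub by blast+
      have nP: "e \<noteq> {u1, u2}" "e \<noteq> {u2, u3}" "e' \<noteq> {u1, u2}" "e' \<noteq> {u2, u3}" using e e' E1 by blast+
      consider "w = u2" | "w = u1" | "w = u3" using w by blast
      then show False
      proof cases
        case 1
        have "e = e' \<or> e = {u1,u2} \<or> e = {u2,u3}"
        proof -
          have a: "degree E u2 \<le> 3" using True by simp
          have b: "u2 \<in> e'" "u2 \<in> {u1, u2}" "u2 \<in> {u2, u3}" "u2 \<in> e" using we we' 1 by auto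
          show ?thesis by (rule deg_le3_cases[OF G a eE(2) E1(1) E1(3) b(1,2,3) nP(3,4) ne12 eE(1) b(4)])
        qed
        then show False using ne nP by blast
      next
        case 2
        have "e = e' \<or> e = {u1,u2}"
          using deg_le2_cases[OF G d1 eE(2) E1(1)] we we' 2 nP eE by auto
        then show False using ne nP by blast
      next
        case 3
        have "e = e' \<or> e = {u2,u3}"
          using deg_le2_cases[OF G d3 eE(2) E1(3)] we we' 3 nP eE by auto
        then show False using ne nP by blast
      qed
    qed
    show ?thesis by (rule FalseE, rule caseB[OF G mp d r1 r2]) (rule leaf, assumption+)
  next
    case False
    then have d2: "degree E u2 \<le> 2" using dle[OF V(2)] by simp
    have nc: "\<not> covered M1 u2 \<and> \<not> covered M2 u2"
    proof -
      have "False" if e: "e \<in> M1 \<union> M2" and w: "u2 \<in> e" for e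
      proof -
        have "e = {u1, u2} \<or> e = {u2, u3}"
          using deg_le2_cases[OF G d2 E1(1) E1(3) _ _ ne12, of e] e sub w by auto
        then show False using e E1 by blast
      qed
      then show ?thesis unfolding covered_def by blast
    qed
    have a1: "covered M1 u1" using add_contra1[OF G mp m1 m2 dj refl E1(1,2)] nc by blast
    have a2: "covered M2 u1" using add_contra2[OF G mp m1 m2 dj refl E1(1,2)] nc by blast
    have a3: "covered M1 u3" using add_contra1[OF G mp m1 m2 dj refl E1(3,4)] nc by blast
    have a4: "covered M2 u3" using add_contra2[OF G mp m1 m2 dj refl E1(3,4)] nc by blast
    show ?thesis unfolding lp3_def using d r1 r2 nc a1 a2 a3 a4 cl by blast
  qed
qed


lemma matching_subset: "matching E M \<Longrightarrow> M' \<subseteq> M \<Longrightarrow> matching E M'"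
  unfolding matching_def by blast

lemma rest_mem: "e \<in> rest_edges E M1 M2 \<longleftrightarrow> e \<in> E \<and> e \<notin> M1 \<and> e \<notin> M2"
  unfolding rest_edges_def by blast

lemma lp3_parts:
  assumes "lp3 E M1 M2 u1 u2 u3"
  shows "distinct [u1, u2, u3]" "{u1, u2} \<in> rest_edges E M1 M2" "{u2, u3} \<in> rest_edges E M1 M2"
     "\<not> covered M1 u2" "\<not> covered M2 u2" "covered M1 u1" "covered M2 u1"
     "covered M1 u3" "covered M2 u3"
     "\<And>e. e \<in> rest_edges E M1 M2 \<Longrightarrow> e \<inter> {u1, u2, u3} \<noteq> {} \<Longrightarrow> e = {u1, u2} \<or> e = {u2, u3}"
  using assms unfolding lp3_def by blast+

lemma advance1:
  assumes gd: "good V E" and mp: "maxpair E M1 M2" and P: "lp3 E M1 M2 u1 u2 u3"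
    and Q: "lp3 E M1 M2 v1 v2 v3" and dj: "{u1, u2, u3} \<inter> {v1, v2, v3} = {}"
    and ua: "{u1, a} \<in> M1" and f: "{a, x} \<in> rest_edges E M1 M2"
    and fP1: "{a, x} \<noteq> {u1, u2}" and fP2: "{a, x} \<noteq> {u2, u3}"
  shows "\<exists>N1 N2. maxpair E N1 N2 \<and> lp3 E N1 N2 u1 a x \<and> lp3 E N1 N2 v1 v2 v3 \<and>
     {u1, a, x} \<inter> {v1, v2, v3} = {} \<and> rest_edges E M1 M2 - {{u1, u2}} \<subseteq> rest_edges E N1 N2"
proof -
  have G: "simple_graph V E" and dle: "\<And>v. v \<in> V \<Longrightarrow> degree E v \<le> 3"
    and n33: "\<And>u v. u \<in> V \<Longrightarrow> v \<in> V \<Longrightarrow> {u, v} \<in> E \<Longrightarrow> \<not> (degree E u = 3 \<and> degree E v = 3)"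
    using gd unfolding good_def by blast+
  have m1: "matching E M1" and m2: "matching E M2" and dj12: "M1 \<inter> M2 = {}"
    using mp unfolding maxpair_def by blast+
  have fin: "finite E" by (rule sg_finite[OF G])
  have sub1: "M1 \<subseteq> E" and sub2: "M2 \<subseteq> E" using m1 m2 unfolding matching_def by blast+
  note PP = lp3_parts[OF P]
  note QQ = lp3_parts[OF Q]
  let ?R = "rest_edges E M1 M2"
  have fE: "{a, x} \<in> E" "{a, x} \<notin> M1" "{a, x} \<notin> M2" using f rest_mem by blast+
  have uaE: "{u1, a} \<in> E" using ua sub1 by blast
  have u12: "{u1, u2} \<in> E" "{u1, u2} \<notin> M1" "{u1, u2} \<notin> M2" using PP(2) rest_mem by blast+
  have aP: "a \<notin> {u1, u2, u3}"
  proof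
    assume "a \<in> {u1, u2, u3}"
    then have "{a, x} \<inter> {u1, u2, u3} \<noteq> {}" by blast
    then show False using PP(10)[OF f] fP1 fP2 by blast
  qed
  have xP: "x \<notin> {u1, u2, u3}"
  proof
    assume "x \<in> {u1, u2, u3}"
    then have "{a, x} \<inter> {u1, u2, u3} \<noteq> {}" by blast
    then show False using PP(10)[OF f] fP1 fP2 by blast
  qed
  have ax: "x \<noteq> a" using sg_noself[OF G fE(1)] .
  have ua_ne: "a \<noteq> u1" "a \<noteq> u2" "a \<noteq> u3" using aP by auto
  have ux_ne: "x \<noteq> u1" "x \<noteq> u2" "x \<noteq> u3" using xP by auto
  have du: "distinct [u1, u2, u3]" using PP(1) .
  obtain e2 where e2: "e2 \<in> M2" "u1 \<in> e2" using PP(7) unfolding covered_def by blast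
  have e2E: "e2 \<in> E" using e2 sub2 by blast
  have Vu1: "u1 \<in> V" and Va: "a \<in> V" using sg_edge[OF G uaE, of u1] by auto
  have Vx: "x \<in> V" using sg_edge[OF G fE(1), of x] by auto
  have deg_u1: "degree E u1 = 3"
  proof -
    have "{u1, a} \<noteq> e2" using ua e2(1) dj12 by blast
    moreover have "{u1, a} \<noteq> {u1, u2}" using ua u12(2) by metis
    moreover have "e2 \<noteq> {u1, u2}" using e2(1) u12(3) by blast
    ultimately have "degree E u1 \<ge> 3" using deg_ge3[OF G uaE e2E u12(1)] e2(2) by simp
    then show ?thesis using dle[OF Vu1] by simp
  qed
  have deg_a: "degree E a \<le> 2" using n33[OF Vu1 Va uaE] deg_u1 dle[OF Va] by auto
  have ane: "{u1, a} \<noteq> {a, x}" using ux_ne(1) ua_ne(1) by (auto simp: doubleton_eq_iff)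
  have aedges: "e = {u1, a} \<or> e = {a, x}" if "e \<in> E" "a \<in> e" for e
    using deg_le2_cases[OF G deg_a uaE fE(1) _ _ ane that(1,2)] by simp
  have ncA2: "\<not> covered M2 a"
  proof
    assume "covered M2 a"
    then obtain e where e: "e \<in> M2" "a \<in> e" unfolding covered_def by blast
    then have "e = {u1, a} \<or> e = {a, x}" using aedges sub2 by blast
    then show False using e(1) ua dj12 fE(3) by blast
  qed
  define N1 where "N1 = insert {u1, u2} (M1 - {{u1, a}})"
  have ncA1: "\<not> covered N1 a"
  proof
    assume "covered N1 a"
    then obtain e where e: "e \<in> N1" "a \<in> e" unfolding covered_def by blast
    show False
    proof (cases "e = {u1, u2}")
      case True then show False using e(2) ua_ne by simp
    next
      case False
      then have "e \<in> M1" "e \<noteq> {u1, a}" using e(1) unfolding N1_def by blast+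
      then show False using aedges[of e] sub1 e(2) fE(2) by blast
    qed
  qed
  have mN1: "matching E N1"
  proof -
    have mm: "matching E (M1 - {{u1, a}})" using matching_subset[OF m1] by blast
    have c1: "\<not> covered (M1 - {{u1, a}}) u1"
    proof
      assume "covered (M1 - {{u1, a}}) u1"
      then obtain e where "e \<in> M1" "e \<noteq> {u1, a}" "u1 \<in> e" unfolding covered_def by blast
      then show False using match_unique[OF m1 _ ua, of e u1] by simp
    qed
    have c2: "\<not> covered (M1 - {{u1, a}}) u2" using PP(4) unfolding covered_def by blast
    show ?thesis unfolding N1_def by (rule add_match[OF mm u12(1) c1 c2])
  qed
  have djN: "N1 \<inter> M2 = {}" using dj12 u12(3) unfolding N1_def by blast
  have cardN: "card (N1 \<union> M2) = card (M1 \<union> M2)"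
  proof -
    have eq: "N1 \<union> M2 = insert {u1, u2} ((M1 \<union> M2) - {{u1, a}})"
      unfolding N1_def using ua dj12 by blast
    have finS: "finite (M1 \<union> M2)" using fin sub1 sub2 by (meson finite_Un finite_subset)
    have nin: "{u1, u2} \<notin> (M1 \<union> M2) - {{u1, a}}" using u12 by blast
    have "card (N1 \<union> M2) = Suc (card ((M1 \<union> M2) - {{u1, a}}))"
      unfolding eq by (rule card_insert_disjoint[OF _ nin]) (use finS in blast)
    moreover have "card ((M1 \<union> M2) - {{u1, a}}) = card (M1 \<union> M2) - 1"
      by (rule card_Diff_singleton) (use ua in blast)
    moreover have "card (M1 \<union> M2) \<ge> 1"
    proof -
      have "M1 \<union> M2 \<noteq> {}" using ua by blast
      then show ?thesis using finS by (simp add: Suc_leI card_gt_0_iff)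
    qed
    ultimately show ?thesis by linarith
  qed
  have mpN: "maxpair E N1 M2"
    unfolding maxpair_def using mN1 m2 djN cardN mp unfolding maxpair_def by metis
  let ?RN = "rest_edges E N1 M2"
  have Rsub: "?R - {{u1, u2}} \<subseteq> ?RN"
    unfolding N1_def rest_edges_def by blast
  have uaRN: "{u1, a} \<in> ?RN" unfolding rest_mem N1_def using uaE ua dj12 ua_ne(2)
    by (auto simp: doubleton_eq_iff)
  have fN1: "{a, x} \<notin> N1" unfolding N1_def using fE(2) fP1 by blast
  have fRN: "{a, x} \<in> ?RN" using Rsub f fP1 by blast
  have cxN1: "covered N1 x"
  proof (rule ccontr)
    assume "\<not> covered N1 x"
    then show False using add_contra1[OF G mp mN1 m2 djN cardN fE(1)] fN1 fE(3) ncA1 by blast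
  qed
  have cxM2: "covered M2 x"
  proof (rule ccontr)
    assume "\<not> covered M2 x"
    then show False using add_contra2[OF G mp mN1 m2 djN cardN fE(1)] fN1 fE(3) ncA2 by blast
  qed
  have inR: "e \<in> ?R" if "e \<in> ?RN" "e \<noteq> {u1, a}" for e
    using that unfolding rest_edges_def N1_def by blast
  have inR2: "e \<noteq> {u1, u2}" if "e \<in> ?RN" for e
    using that unfolding rest_edges_def N1_def by blast
  have lpN: "lp3 E N1 M2 u1 a x"
    unfolding lp3_def
  proof (intro conjI ballI impI)
    show "distinct [u1, a, x]" using ua_ne ux_ne ax by auto
    show "{u1, a} \<in> ?RN" by (rule uaRN)
    show "{a, x} \<in> ?RN" by (rule fRN)
    show "\<not> covered N1 a" by (rule ncA1)
    show "\<not> covered M2 a" by (rule ncA2)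
    show "covered N1 u1" unfolding covered_def N1_def by blast
    show "covered M2 u1" by (rule PP(7))
    show "covered N1 x" by (rule cxN1)
    show "covered M2 x" by (rule cxM2)
    fix e assume eR: "e \<in> ?RN" and em: "e \<inter> {u1, a, x} \<noteq> {}"
    show "e = {u1, a} \<or> e = {a, x}"
    proof (cases "e = {u1, a}")
      case True then show ?thesis by simp
    next
      case False
      have eR0: "e \<in> ?R" using inR[OF eR False] .
      have e12: "e \<noteq> {u1, u2}" using inR2[OF eR] .
      have eE: "e \<in> E" "e \<notin> N1" "e \<notin> M2" using eR rest_mem by blast+
      consider "u1 \<in> e" | "a \<in> e" | "x \<in> e" using em by blast
      then show ?thesis
      proof cases
        case 1
        then have "e = {u1, u2} \<or> e = {u2, u3}" using PP(10)[OF eR0] by blast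
        then show ?thesis using e12 1 du by auto
      next
        case 2
        then show ?thesis using aedges[OF eE(1)] False by blast
      next
        case 3
        obtain e1 where e1: "e1 \<in> N1" "x \<in> e1" using cxN1 unfolding covered_def by blast
        obtain e2' where e2': "e2' \<in> M2" "x \<in> e2'" using cxM2 unfolding covered_def by blast
        have e1E: "e1 \<in> E" using e1(1) mN1 unfolding matching_def by blast
        have e2E': "e2' \<in> E" using e2'(1) sub2 by blast
        have n12: "e1 \<noteq> e2'" using e1(1) e2'(1) djN by blast
        have n13: "e1 \<noteq> {a, x}" using e1(1) fN1 by blast
        have n23: "e2' \<noteq> {a, x}" using e2'(1) fE(3) by blast
        have "e = e1 \<or> e = e2' \<or> e = {a, x}"
          using deg_le3_cases[OF G dle[OF Vx] e1E e2E' fE(1) e1(2) e2'(2) _ n12 n13 n23 eE(1) 3] by simp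
        then show ?thesis using eE(2,3) e1(1) e2'(1) by blast
      qed
    qed
  qed
  have aQ: "a \<notin> {v1, v2, v3}"
  proof
    assume "a \<in> {v1, v2, v3}"
    then consider "a = v2" | "a = v1" | "a = v3" by blast
    then show False
    proof cases
      case 1 then show False using QQ(4) ua unfolding covered_def by blast
    next
      case 2 then show False using QQ(7) ncA2 by simp
    next
      case 3 then show False using QQ(9) ncA2 by simp
    qed
  qed
  have xQ: "x \<notin> {v1, v2, v3}"
  proof
    assume "x \<in> {v1, v2, v3}"
    then have "{a, x} \<inter> {v1, v2, v3} \<noteq> {}" by blast
    then have "{a, x} = {v1, v2} \<or> {a, x} = {v2, v3}" using QQ(10)[OF f] by blast
    then show False using aQ by auto
  qed
  have u1Q: "u1 \<notin> {v1, v2, v3}" and u2Q: "u2 \<notin> {v1, v2, v3}" using dj by blast+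
  have lpQ: "lp3 E N1 M2 v1 v2 v3"
    unfolding lp3_def
  proof (intro conjI ballI impI)
    show "distinct [v1, v2, v3]" by (rule QQ(1))
    show "{v1, v2} \<in> ?RN" using Rsub QQ(2) u1Q u2Q by (auto simp: doubleton_eq_iff)
    show "{v2, v3} \<in> ?RN" using Rsub QQ(3) u1Q u2Q by (auto simp: doubleton_eq_iff)
    show "\<not> covered N1 v2" using QQ(4) u1Q u2Q unfolding covered_def N1_def by blast
    show "\<not> covered M2 v2" by (rule QQ(5))
    show "covered N1 v1" using QQ(6) u1Q aQ unfolding covered_def N1_def by blast
    show "covered M2 v1" by (rule QQ(7))
    show "covered N1 v3" using QQ(8) u1Q aQ unfolding covered_def N1_def by blast
    show "covered M2 v3" by (rule QQ(9))
    fix e assume eR: "e \<in> ?RN" and em: "e \<inter> {v1, v2, v3} \<noteq> {}"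
    have "e \<noteq> {u1, a}" using em u1Q aQ by blast
    then have "e \<in> ?R" using inR[OF eR] by blast
    then show "e = {v1, v2} \<or> e = {v2, v3}" using QQ(10) em by blast
  qed
  have djN2: "{u1, a, x} \<inter> {v1, v2, v3} = {}" using u1Q aQ xQ by blast
  show ?thesis using mpN lpN lpQ djN2 Rsub by blast
qed


lemma advance2:
  assumes gd: "good V E" and mp: "maxpair E M1 M2" and P: "lp3 E M1 M2 u1 u2 u3"
    and Q: "lp3 E M1 M2 v1 v2 v3" and dj: "{u1, u2, u3} \<inter> {v1, v2, v3} = {}"
    and ua: "{u1, a} \<in> M1 \<union> M2" and f: "{a, x} \<in> rest_edges E M1 M2"
    and fP1: "{a, x} \<noteq> {u1, u2}" and fP2: "{a, x} \<noteq> {u2, u3}"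
  shows "\<exists>N1 N2. maxpair E N1 N2 \<and> lp3 E N1 N2 u1 a x \<and> lp3 E N1 N2 v1 v2 v3 \<and>
     {u1, a, x} \<inter> {v1, v2, v3} = {} \<and> rest_edges E M1 M2 - {{u1, u2}} \<subseteq> rest_edges E N1 N2"
proof (cases "{u1, a} \<in> M1")
  case True
  show ?thesis by (rule advance1[OF gd mp P Q dj True f fP1 fP2])
next
  case False
  then have ua2: "{u1, a} \<in> M2" using ua by blast
  have f': "{a, x} \<in> rest_edges E M2 M1" using f rest_sym[of E M1 M2] by simp
  have "\<exists>N1 N2. maxpair E N1 N2 \<and> lp3 E N1 N2 u1 a x \<and> lp3 E N1 N2 v1 v2 v3 \<and>
     {u1, a, x} \<inter> {v1, v2, v3} = {} \<and> rest_edges E M2 M1 - {{u1, u2}} \<subseteq> rest_edges E N1 N2"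
    by (rule advance1[OF gd maxpair_sym[OF mp] lp3_symM[OF P] lp3_symM[OF Q] dj ua2 f' fP1 fP2])
  then show ?thesis using rest_sym[of E M1 M2] by simp
qed

lemma advance:
  assumes gd: "good V E" and mp: "maxpair E M1 M2" and P: "lp3 E M1 M2 u1 u2 u3"
    and Q: "lp3 E M1 M2 v1 v2 v3" and dj: "{u1, u2, u3} \<inter> {v1, v2, v3} = {}"
    and w: "w \<in> {u1, u3}" and ua: "{w, a} \<in> M1 \<union> M2" and f: "{a, x} \<in> rest_edges E M1 M2"
    and fP: "{a, x} \<notin> {{u1, u2}, {u2, u3}}"
  shows "\<exists>N1 N2 p1 p2 p3 z. z \<in> {{u1, u2}, {u2, u3}} \<and> maxpair E N1 N2 \<and> lp3 E N1 N2 p1 p2 p3 \<and>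
     {a, x} \<in> {{p1, p2}, {p2, p3}} \<and> lp3 E N1 N2 v1 v2 v3 \<and>
     {p1, p2, p3} \<inter> {v1, v2, v3} = {} \<and> rest_edges E M1 M2 - {z} \<subseteq> rest_edges E N1 N2"
proof (cases "w = u1")
  case True
  obtain N1 N2 where N: "maxpair E N1 N2" "lp3 E N1 N2 u1 a x" "lp3 E N1 N2 v1 v2 v3"
     "{u1, a, x} \<inter> {v1, v2, v3} = {}" "rest_edges E M1 M2 - {{u1, u2}} \<subseteq> rest_edges E N1 N2"
    using advance2[OF gd mp P Q dj, of a x] ua True f fP by blast
  show ?thesis
    apply (rule exI[of _ N1], rule exI[of _ N2], rule exI[of _ u1], rule exI[of _ a], rule exI[of _ x],
        rule exI[of _ "{u1, u2}"])
    using N by simp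
next
  case False
  then have w3: "w = u3" using w by blast
  have P': "lp3 E M1 M2 u3 u2 u1" by (rule lp3_rev[OF P])
  have dj': "{u3, u2, u1} \<inter> {v1, v2, v3} = {}" using dj by blast
  have fP1: "{a, x} \<noteq> {u3, u2}" and fP2: "{a, x} \<noteq> {u2, u1}" using fP by (auto simp: insert_commute)
  obtain N1 N2 where N: "maxpair E N1 N2" "lp3 E N1 N2 u3 a x" "lp3 E N1 N2 v1 v2 v3"
     "{u3, a, x} \<inter> {v1, v2, v3} = {}" "rest_edges E M1 M2 - {{u3, u2}} \<subseteq> rest_edges E N1 N2"
    using advance2[OF gd mp P' Q dj' _ f fP1 fP2] ua w3 by blast
  show ?thesis
    apply (rule exI[of _ N1], rule exI[of _ N2], rule exI[of _ u3], rule exI[of _ a], rule exI[of _ x],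
        rule exI[of _ "{u2, u3}"])
    using N by (simp add: insert_commute)
qed

lemma classify:
  assumes G: "simple_graph V E" and P: "lp3 E M1 M2 u1 u2 u3"
    and e: "e \<in> {{u1, u2}, {u2, u3}}" and f: "f \<in> rest_edges E M1 M2"
    and fP: "f \<notin> {{u1, u2}, {u2, u3}}" and H: "H_adj E e f"
  shows "\<exists>w a x. w \<in> {u1, u3} \<and> {w, a} \<in> M1 \<union> M2 \<and> f = {a, x}"
proof -
  note PP = lp3_parts[OF P]
  have fdis: "f \<inter> {u1, u2, u3} = {}" using PP(10)[OF f] fP by blast
  have esub: "e \<subseteq> {u1, u2, u3}" using e by blast
  have "e \<inter> f = {}" using fdis esub by blast
  moreover have "e \<noteq> f" using e fP by blast
  ultimately obtain e3 where e3: "e3 \<in> E" "e \<inter> e3 \<noteq> {}" "e3 \<inter> f \<noteq> {}"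
    using H unfolding H_adj_def edge_dist_le2_def by blast
  obtain w where w: "w \<in> e" "w \<in> e3" using e3(2) by blast
  obtain y where y: "y \<in> e3" "y \<in> f" using e3(3) by blast
  have wP: "w \<in> {u1, u2, u3}" using w esub by blast
  have yP: "y \<notin> {u1, u2, u3}" using y fdis by blast
  obtain y' where y': "y' \<noteq> w" "e3 = {w, y'}" using sg_edge[OF G e3(1) w(2)] by blast
  have "y = y'" using y(1) y' wP yP by auto
  then have e3eq: "e3 = {w, y}" using y' by simp
  have e3S: "e3 \<in> M1 \<union> M2"
  proof (rule ccontr)
    assume "e3 \<notin> M1 \<union> M2"
    then have "e3 \<in> rest_edges E M1 M2" using e3(1) rest_mem by blast
    moreover have "e3 \<inter> {u1, u2, u3} \<noteq> {}" using w wP by blast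
    ultimately have "e3 \<subseteq> {u1, u2, u3}" using PP(10) by blast
    then show False using y(1) yP by blast
  qed
  have "w \<noteq> u2" using e3S w(2) PP(4,5) unfolding covered_def by blast
  then have w13: "w \<in> {u1, u3}" using wP by blast
  have fE: "f \<in> E" using f rest_mem by blast
  obtain x where "f = {y, x}" using sg_edge[OF G fE y(2)] by blast
  then show ?thesis using w13 e3S e3eq by blast
qed

lemma avoid:
  assumes "(restr_adj W adj ^^ n) x y" "x \<noteq> z"
  shows "(restr_adj (W - {z}) adj ^^ n) x y \<or> (\<exists>m<n. (restr_adj W adj ^^ m) z y)"
  using assms
proof (induction n arbitrary: x)
  case 0
  then show ?case by simp
next
  case (Suc n)
  obtain x1 where x1: "restr_adj W adj x x1" "(restr_adj W adj ^^ n) x1 y"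
    using relpowp_Suc_D2[OF Suc.prems(1)] by blast
  show ?case
  proof (cases "x1 = z")
    case True
    then show ?thesis using x1(2) by blast
  next
    case False
    have st: "restr_adj (W - {z}) adj x x1" using x1(1) False Suc.prems(2) unfolding restr_adj_def by blast
    from Suc.IH[OF x1(2) False] show ?thesis
    proof
      assume "(restr_adj (W - {z}) adj ^^ n) x1 y"
      then have "(restr_adj (W - {z}) adj ^^ Suc n) x y" using st by (rule relpowp_Suc_I2[rotated])
      then show ?thesis by blast
    next
      assume "\<exists>m<n. (restr_adj W adj ^^ m) z y"
      then show ?thesis using less_SucI by blast
    qed
  qed
qed

lemma walk_mono:
  assumes "W \<subseteq> W'" "(restr_adj W adj ^^ n) x y"
  shows "(restr_adj W' adj ^^ n) x y"
  by (rule relpowp_mono[OF _ assms(2)]) (use assms(1) in \<open>auto simp: restr_adj_def\<close>)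


lemma main:
  assumes gd: "good V E" and gQ: "g \<in> {{v1, v2}, {v2, v3}}"
  shows "\<forall>M1 M2 u1 u2 u3 e. maxpair E M1 M2 \<longrightarrow> lp3 E M1 M2 u1 u2 u3 \<longrightarrow> lp3 E M1 M2 v1 v2 v3 \<longrightarrow>
     {u1, u2, u3} \<inter> {v1, v2, v3} = {} \<longrightarrow> e \<in> {{u1, u2}, {u2, u3}} \<longrightarrow>
     \<not> (restr_adj (rest_edges E M1 M2) (H_adj E) ^^ n) e g"
proof (induction n rule: less_induct)
  case (less n)
  have G: "simple_graph V E" using gd unfolding good_def by blast
  show ?case
  proof (intro allI impI notI)
    fix M1 M2 u1 u2 u3 e
    assume mp: "maxpair E M1 M2" and P: "lp3 E M1 M2 u1 u2 u3" and Q: "lp3 E M1 M2 v1 v2 v3"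
      and dj: "{u1, u2, u3} \<inter> {v1, v2, v3} = {}" and eP: "e \<in> {{u1, u2}, {u2, u3}}"
      and W: "(restr_adj (rest_edges E M1 M2) (H_adj E) ^^ n) e g"
    show False
    proof (cases n)
      case 0
      then have "e = g" using W by simp
      moreover have "u2 \<in> e" using eP by blast
      moreover have "g \<subseteq> {v1, v2, v3}" using gQ by blast
      ultimately show False using dj by blast
    next
      case (Suc m)
      obtain f where ef: "restr_adj (rest_edges E M1 M2) (H_adj E) e f"
        and fg: "(restr_adj (rest_edges E M1 M2) (H_adj E) ^^ m) f g"
        using relpowp_Suc_D2[OF W[unfolded Suc]] by blast
      have fR: "f \<in> rest_edges E M1 M2" and Hf: "H_adj E e f" using ef unfolding restr_adj_def by blast+
      have mn: "m < n" using Suc by simp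
      show False
      proof (cases "f \<in> {{u1, u2}, {u2, u3}}")
        case True
        show False using less.IH[OF mn, rule_format, OF mp P Q dj True] fg by blast
      next
        case False
        obtain w a x where wax: "w \<in> {u1, u3}" "{w, a} \<in> M1 \<union> M2" "f = {a, x}"
          using classify[OF G P eP fR False Hf] by blast
        obtain N1 N2 p1 p2 p3 z where N: "z \<in> {{u1, u2}, {u2, u3}}" "maxpair E N1 N2" "lp3 E N1 N2 p1 p2 p3"
          "{a, x} \<in> {{p1, p2}, {p2, p3}}" "lp3 E N1 N2 v1 v2 v3"
          "{p1, p2, p3} \<inter> {v1, v2, v3} = {}" "rest_edges E M1 M2 - {z} \<subseteq> rest_edges E N1 N2"
        proof -
          have f': "{a, x} \<in> rest_edges E M1 M2" using fR wax(3) by simp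
          have fP': "{a, x} \<notin> {{u1, u2}, {u2, u3}}" using False wax(3) by simp
          from advance[OF gd mp P Q dj wax(1,2) f' fP'] show ?thesis
            by (elim exE conjE) (rule that; assumption)
        qed
        have fz: "f \<noteq> z" using N(1) False by blast
        from avoid[OF fg fz] show False
        proof
          assume "(restr_adj (rest_edges E M1 M2 - {z}) (H_adj E) ^^ m) f g"
          then have "(restr_adj (rest_edges E N1 N2) (H_adj E) ^^ m) f g"
            by (rule walk_mono[OF N(7)])
          moreover have "f \<in> {{p1, p2}, {p2, p3}}" using N(4) wax(3) by simp
          ultimately show False using less.IH[OF mn, rule_format, OF N(2,3,5,6)] by blast
        next
          assume "\<exists>k<m. (restr_adj (rest_edges E M1 M2) (H_adj E) ^^ k) z g"
          then obtain k where k: "k < m" "(restr_adj (rest_edges E M1 M2) (H_adj E) ^^ k) z g" by blast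
          have kn: "k < n" using k(1) mn by simp
          show False using less.IH[OF kn] mp P Q dj N(1) k(2) by blast
        qed
      qed
    qed
  qed
qed

theorem lemma3:
  fixes V :: "'a set" and E :: "'a set set"
  assumes "simple_graph V E"
    and "connected_graph V E"
    and "\<forall>v\<in>V. degree E v \<le> 3"
    and "\<forall>v\<in>V. degree E v \<ge> 2"
    and "\<forall>u\<in>V. \<forall>v\<in>V. {u, v} \<in> E \<longrightarrow> \<not> (degree E u = 3 \<and> degree E v = 3)"
    and "optimal_pair E M1 M2"
    and "P3_component E M1 M2 u1 u2 u3"
    and "P3_component E M1 M2 v1 v2 v3"
    and "{u1, u2, u3} \<noteq> {v1, v2, v3}"
  shows "\<not> (\<exists>C \<in> H_components E M1 M2.
             {u1, u2} \<in> C \<and> {u2, u3} \<in> C \<and> {v1, v2} \<in> C \<and> {v2, v3} \<in> C)"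
proof
  assume "\<exists>C \<in> H_components E M1 M2. {u1, u2} \<in> C \<and> {u2, u3} \<in> C \<and> {v1, v2} \<in> C \<and> {v2, v3} \<in> C"
  then obtain C where C: "C \<in> H_components E M1 M2" "{u1, u2} \<in> C" "{v1, v2} \<in> C" by blast
  have gd: "good V E" unfolding good_def using assms(1,3,4,5) by blast
  have mp: "maxpair E M1 M2" using assms(6) unfolding optimal_pair_def maxpair_def by blast
  have lpP: "lp3 E M1 M2 u1 u2 u3" by (rule p3_to_lp3[OF gd mp assms(7)])
  have lpQ: "lp3 E M1 M2 v1 v2 v3" by (rule p3_to_lp3[OF gd mp assms(8)])
  let ?R = "rest_edges E M1 M2"
  have dj: "{u1, u2, u3} \<inter> {v1, v2, v3} = {}"
  proof (rule ccontr)
    assume "{u1, u2, u3} \<inter> {v1, v2, v3} \<noteq> {}"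
    then obtain z where z: "z \<in> {u1, u2, u3}" "z \<in> {v1, v2, v3}" by blast
    have c1: "{u1, u2, u3} \<in> components (\<Union>?R) (\<lambda>x y. {x, y} \<in> ?R)"
      using assms(7) unfolding P3_component_def edge_sub_components_def by blast
    have c2: "{v1, v2, v3} \<in> components (\<Union>?R) (\<lambda>x y. {x, y} \<in> ?R)"
      using assms(8) unfolding P3_component_def edge_sub_components_def by blast
    have sym: "\<And>x y. {x, y} \<in> ?R \<Longrightarrow> {y, x} \<in> ?R" by (simp add: insert_commute)
    have "{u1, u2, u3} = {v1, v2, v3}" by (rule comp_disj[OF sym c1 c2 z])
    then show False using assms(9) by blast
  qed
  have Hsym: "\<And>x y. H_adj E x y \<Longrightarrow> H_adj E y x"
    unfolding H_adj_def edge_dist_le2_def by blast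
  have C': "C \<in> components ?R (H_adj E)" using C(1) unfolding H_components_def .
  have "(restr_adj ?R (H_adj E))\<^sup>*\<^sup>* {u1, u2} {v1, v2}" by (rule comp_reach[OF Hsym C' C(2,3)])
  then obtain n where W: "(restr_adj ?R (H_adj E) ^^ n) {u1, u2} {v1, v2}"
    using rtranclp_imp_relpowp by metis
  have gQ: "{v1, v2} \<in> {{v1, v2}, {v2, v3}}" by simp
  have e0: "{u1, u2} \<in> {{u1, u2}, {u2, u3}}" by simp
  show False using main[OF gd gQ, of n, rule_format, OF mp lpP lpQ dj e0] W by blast
qed

end
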